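(* Let $G$ be a connected non-transmission-regular graph on $n$ vertices, and let $\tau(G) = 2D_{\max}(G) - \partial^Q(G)$. (1) If $n$ is odd, then \[ \tau(G)\geq \frac{n+2-\sqrt{n^2+4n-4}}{2}, \] with equality if and only if $G\cong K_{1,2,\ldots,2}$. (2) If $n$ is even, then \[ \tau(G)\geq \frac{n+4-\sqrt{n^2+8n}}{2}, \] with equality if and only if $G$ is isomorphic to some $(n-4)$-DVDR graph.
   Context: All graphs are finite, simple and undirected. For a connected graph $G$ with vertex set $\{v_1,\dots,v_n\}$, the distance matrix $D(G)$ is the $n\times n$ matrix whose $(i,j)$-entry is the distance $d_{ij}$ between $v_i$ and $v_j$. The transmission $D_i$ of $v_i$ is the $i$-th row sum of $D(G)$; $D_{\max}(G)$ and $D_{\min}(G)$ denote the maximum and minimum transmission over all vertices. $G$ is transmission-regular if $D_{\max}(G)=D_{\min}(G)$, and non-transmission-regular otherwise. The distance signless Laplacian matrix is $Q(G)=D(G)+\mathrm{diag}(D_1,\dots,D_n)$, and $\partial^Q(G)$ denotes its largest eigenvalue. A distinguished vertex deleted regular (DVDR) graph is a connected graph $G$ on $n$ vertices having a vertex $v$ of degree $n-1$ such that $G-v$ is regular; if $G-v$ is $r$-regular, $G$ is called an $r$-DVDR graph. For odd $n=2r-1$, $K_{1,2,\ldots,2}$ denotes the complete $r$-partite graph with one part of size $1$ and $r-1$ parts of size $2$. *)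

theory Defs
  imports "HOL-Analysis.Analysis"
begin

definition simple_graph :: "('n::finite \<Rightarrow> 'n \<Rightarrow> bool) \<Rightarrow> bool" where
  "simple_graph E \<longleftrightarrow> (\<forall>u v. E u v \<longrightarrow> E v u) \<and> (\<forall>u. \<not> E u u)"

definition edge_rel :: "('n \<Rightarrow> 'n \<Rightarrow> bool) \<Rightarrow> ('n \<times> 'n) set" where
  "edge_rel E = {(u, v). E u v}"

definition connected_graph :: "('n::finite \<Rightarrow> 'n \<Rightarrow> bool) \<Rightarrow> bool" where
  "connected_graph E \<longleftrightarrow> (\<forall>u v. (u, v) \<in> (edge_rel E)\<^sup>*)"

definition gdist :: "('n::finite \<Rightarrow> 'n \<Rightarrow> bool) \<Rightarrow> 'n \<Rightarrow> 'n \<Rightarrow> nat" where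
  "gdist E u v = (LEAST k. (u, v) \<in> (edge_rel E) ^^ k)"

definition dist_matrix :: "('n::finite \<Rightarrow> 'n \<Rightarrow> bool) \<Rightarrow> real^'n^'n" where
  "dist_matrix E = (\<chi> i j. real (gdist E i j))"

definition transmission :: "('n::finite \<Rightarrow> 'n \<Rightarrow> bool) \<Rightarrow> 'n \<Rightarrow> real" where
  "transmission E i = (\<Sum>j\<in>UNIV. real (gdist E i j))"

definition Dmax :: "('n::finite \<Rightarrow> 'n \<Rightarrow> bool) \<Rightarrow> real" where
  "Dmax E = Max (range (transmission E))"

definition Dmin :: "('n::finite \<Rightarrow> 'n \<Rightarrow> bool) \<Rightarrow> real" where
  "Dmin E = Min (range (transmission E))"

definition transmission_regular :: "('n::finite \<Rightarrow> 'n \<Rightarrow> bool) \<Rightarrow> bool" where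
  "transmission_regular E \<longleftrightarrow> Dmax E = Dmin E"

definition dsl_matrix :: "('n::finite \<Rightarrow> 'n \<Rightarrow> bool) \<Rightarrow> real^'n^'n" where
  "dsl_matrix E = dist_matrix E + (\<chi> i j. if i = j then transmission E i else 0)"

definition real_eigenvalues :: "real^'n^'n \<Rightarrow> real set" where
  "real_eigenvalues A = {l. \<exists>x. x \<noteq> 0 \<and> A *v x = l *\<^sub>R x}"

text \<open>Largest eigenvalue (the matrix is real symmetric, so all eigenvalues are real).\<close>
definition largest_eigenvalue :: "real^'n^'n \<Rightarrow> real" where
  "largest_eigenvalue A = Max (real_eigenvalues A)"

definition dsl_spectral_radius :: "('n::finite \<Rightarrow> 'n \<Rightarrow> bool) \<Rightarrow> real" where
  "dsl_spectral_radius E = largest_eigenvalue (dsl_matrix E)"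

definition tau :: "('n::finite \<Rightarrow> 'n \<Rightarrow> bool) \<Rightarrow> real" where
  "tau E = 2 * Dmax E - dsl_spectral_radius E"

text \<open>The complete multipartite graph K_{1,2,...,2} on vertex set {0..<n}, n = 2r-1 odd:
  vertex 0 forms the part of size 1, vertices 2i-1 and 2i form the i-th part of size 2.
  Two vertices are adjacent iff they lie in different parts.\<close>
definition K122_adj :: "nat \<Rightarrow> nat \<Rightarrow> bool" where
  "K122_adj u v \<longleftrightarrow> (u + 1) div 2 \<noteq> (v + 1) div 2"

definition iso_K122 :: "('n::finite \<Rightarrow> 'n \<Rightarrow> bool) \<Rightarrow> bool" where
  "iso_K122 E \<longleftrightarrow> (\<exists>f. bij_betw f (UNIV :: 'n set) {0..<CARD('n)} \<and>
      (\<forall>u v. E u v \<longleftrightarrow> K122_adj (f u) (f v)))"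

definition degree :: "('n::finite \<Rightarrow> 'n \<Rightarrow> bool) \<Rightarrow> 'n \<Rightarrow> nat" where
  "degree E v = card {u. E v u}"

definition DVDR :: "nat \<Rightarrow> ('n::finite \<Rightarrow> 'n \<Rightarrow> bool) \<Rightarrow> bool" where
  "DVDR r E \<longleftrightarrow> connected_graph E \<and>
     (\<exists>v. degree E v = CARD('n) - 1 \<and> (\<forall>w. w \<noteq> v \<longrightarrow> card {u. u \<noteq> v \<and> E w u} = r))"

end

theory Submission
  imports Defs
begin

definition symm :: "real^'n^'n \<Rightarrow> bool" where
  "symm A \<longleftrightarrow> (\<forall>i j. A$i$j = A$j$i)"

lemma mv_comp: "(A *v x) $ i = (\<Sum>j\<in>UNIV. A$i$j * x$j)"
  by (simp add: matrix_vector_mult_def)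

lemma symm_inner:
  fixes A :: "real^'n^'n"
  assumes "symm A" shows "x \<bullet> (A *v y) = y \<bullet> (A *v x)"
proof -
  have "x \<bullet> (A *v y) = (\<Sum>i\<in>UNIV. \<Sum>j\<in>UNIV. x$i * A$i$j * y$j)"
    by (simp add: inner_vec_def mv_comp sum_distrib_left mult.assoc)
  also have "\<dots> = (\<Sum>j\<in>UNIV. \<Sum>i\<in>UNIV. x$i * A$i$j * y$j)"
    by (rule sum.swap)
  also have "\<dots> = y \<bullet> (A *v x)"
    using assms unfolding symm_def
    by (simp add: inner_vec_def mv_comp sum_distrib_left mult.commute mult.left_commute)
  finally show ?thesis .
qed

lemma quad_scale:
  fixes A :: "real^'n^'n"
  shows "(c *\<^sub>R y) \<bullet> (A *v (c *\<^sub>R y)) = c^2 * (y \<bullet> (A *v y))"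
  by (simp add: matrix_vector_mult_scaleR power2_eq_square)

lemma rayleigh_max_exists:
  fixes A :: "real^'n^'n"
  shows "\<exists>x. norm x = 1 \<and> (\<forall>y. norm y = 1 \<longrightarrow> y \<bullet> (A *v y) \<le> x \<bullet> (A *v x))"
proof -
  have "compact (sphere (0::real^'n) 1)" by simp
  moreover have "sphere (0::real^'n) 1 \<noteq> {}" by simp
  moreover have "continuous_on (sphere (0::real^'n) 1) (\<lambda>x. x \<bullet> (A *v x))"
    by (intro continuous_intros)
  ultimately obtain x where "x \<in> sphere 0 1" "\<forall>y\<in>sphere 0 1. y \<bullet> (A *v y) \<le> x \<bullet> (A *v x)"
    using continuous_attains_sup by blast
  then show ?thesis by auto
qed

lemma rayleigh_all:
  fixes A :: "real^'n^'n"
  assumes "norm x = 1" and mx: "\<forall>y. norm y = 1 \<longrightarrow> y \<bullet> (A *v y) \<le> x \<bullet> (A *v x)"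
  shows "y \<bullet> (A *v y) \<le> (x \<bullet> (A *v x)) * (y \<bullet> y)"
proof (cases "y = 0")
  case True then show ?thesis by simp
next
  case False
  define c where "c = 1 / norm y"
  have np: "norm y > 0" using False by simp
  have "norm (c *\<^sub>R y) = 1" using np by (simp add: c_def)
  then have "(c *\<^sub>R y) \<bullet> (A *v (c *\<^sub>R y)) \<le> x \<bullet> (A *v x)" using mx by blast
  then have "c^2 * (y \<bullet> (A *v y)) \<le> x \<bullet> (A *v x)" using quad_scale[of c y A] by linarith
  then have "(norm y)^2 * (c^2 * (y \<bullet> (A *v y))) \<le> (norm y)^2 * (x \<bullet> (A *v x))"
    by (simp add: mult_left_mono)
  moreover have "(norm y)^2 * c^2 = 1" using np by (simp add: c_def power_divide)
  ultimately have "y \<bullet> (A *v y) \<le> (norm y)^2 * (x \<bullet> (A *v x))"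
    by (metis mult.assoc mult_1)
  then show ?thesis by (simp add: power2_norm_eq_inner mult.commute)
qed

lemma rayleigh_eigen:
  fixes A :: "real^'n^'n"
  assumes sy: "symm A" and nx: "norm x = 1"
    and all: "\<And>y. y \<bullet> (A *v y) \<le> \<mu> * (y \<bullet> y)" and mu: "x \<bullet> (A *v x) = \<mu>"
  shows "A *v x = \<mu> *\<^sub>R x"
proof (rule ccontr)
  assume ne: "A *v x \<noteq> \<mu> *\<^sub>R x"
  define g where "g = A *v x - \<mu> *\<^sub>R x"
  have gp: "g \<bullet> g > 0" using ne by (simp add: g_def)
  define c where "c = g \<bullet> (A *v g) - \<mu> * (g \<bullet> g)"
  have xx: "x \<bullet> x = 1" using nx by (simp add: power2_norm_eq_inner[symmetric])
  have key: "2 * t * (g \<bullet> g) + t^2 * c \<le> 0" for t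
  proof -
    have h: "(x + t *\<^sub>R g) \<bullet> (A *v (x + t *\<^sub>R g)) \<le> \<mu> * ((x + t *\<^sub>R g) \<bullet> (x + t *\<^sub>R g))"
      by (rule all)
    have s: "x \<bullet> (A *v g) = g \<bullet> (A *v x)" using symm_inner[OF sy] by blast
    have e1: "(x + t *\<^sub>R g) \<bullet> (A *v (x + t *\<^sub>R g)) =
       x \<bullet> (A *v x) + 2 * t * (g \<bullet> (A *v x)) + t^2 * (g \<bullet> (A *v g))"
      using s by (simp add: algebra_simps inner_add_left inner_add_right power2_eq_square)
    have e2: "(x + t *\<^sub>R g) \<bullet> (x + t *\<^sub>R g) = 1 + 2 * t * (g \<bullet> x) + t^2 * (g \<bullet> g)"
      using xx by (simp add: algebra_simps inner_add_left inner_add_right power2_eq_square inner_commute)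
    have e3: "g \<bullet> (A *v x) - \<mu> * (g \<bullet> x) = g \<bullet> g"
      by (simp add: g_def inner_diff_right inner_diff_left algebra_simps)
    have alg: "\<mu> + 2*t*a + t^2*b \<le> \<mu>*(1 + 2*t*p + t^2*q) \<Longrightarrow> a = q + \<mu>*p
       \<Longrightarrow> 2*t*q + t^2*(b - \<mu>*q) \<le> 0" for a b p q :: real
      by (simp add: algebra_simps)
    show ?thesis unfolding c_def
      apply (rule alg[of "g \<bullet> (A *v x)" "g \<bullet> (A *v g)" "g \<bullet> x"])
      using h e1 e2 e3 mu by auto
  qed
  define t where "t = (g \<bullet> g) / (\<bar>c\<bar> + 1)"
  have tp: "t > 0" using gp by (simp add: t_def)
  have "t * \<bar>c\<bar> \<le> g \<bullet> g"
  proof -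
    have "t * \<bar>c\<bar> = (g \<bullet> g) * (\<bar>c\<bar> / (\<bar>c\<bar> + 1))" by (simp add: t_def)
    also have "\<dots> \<le> (g \<bullet> g) * 1"
      using gp by (intro mult_left_mono) auto
    finally show ?thesis by simp
  qed
  then have "t * c \<ge> - (g \<bullet> g)" by (smt (verit) mult_minus_right abs_ge_minus_self mult_left_mono tp)
  then have "2 * (g \<bullet> g) + t * c > 0" using gp by linarith
  then have "t * (2 * (g \<bullet> g) + t * c) > 0" using tp by simp
  moreover have "t * (2 * (g \<bullet> g) + t * c) = 2 * t * (g \<bullet> g) + t^2 * c"
    by (simp add: algebra_simps power2_eq_square)
  ultimately show False using key[of t] by linarith
qed

lemma eig_finite:
  fixes A :: "real^'n^'n"
  assumes sy: "symm A"
  shows "finite (real_eigenvalues A)"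
proof -
  let ?E = "real_eigenvalues A"
  define ev where "ev l = (SOME v. v \<noteq> 0 \<and> A *v v = l *\<^sub>R v)" for l
  have evp: "ev l \<noteq> 0 \<and> A *v ev l = l *\<^sub>R ev l" if "l \<in> ?E" for l
  proof -
    have "\<exists>v. v \<noteq> 0 \<and> A *v v = l *\<^sub>R v" using that by (simp add: real_eigenvalues_def)
    then show ?thesis unfolding ev_def by (rule someI_ex)
  qed
  have inj: "inj_on ev ?E"
  proof (rule inj_onI)
    fix l l' assume "l \<in> ?E" "l' \<in> ?E" "ev l = ev l'"
    then have "l *\<^sub>R ev l = l' *\<^sub>R ev l" "ev l \<noteq> 0" using evp by metis+
    then show "l = l'" by (simp add: scaleR_cancel_right)
  qed
  have orth: "pairwise orthogonal (ev ` ?E)"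
  proof (clarsimp simp: pairwise_def)
    fix l l' assume l: "l \<in> ?E" and l': "l' \<in> ?E" and ne: "ev l \<noteq> ev l'"
    then have ll: "l \<noteq> l'" by auto
    have "ev l \<bullet> (A *v ev l') = ev l' \<bullet> (A *v ev l)" by (rule symm_inner[OF sy])
    then have "l' * (ev l \<bullet> ev l') = l * (ev l' \<bullet> ev l)" using evp[OF l] evp[OF l'] by simp
    then have "(l' - l) * (ev l \<bullet> ev l') = 0" by (simp add: inner_commute algebra_simps)
    then show "orthogonal (ev l) (ev l')" using ll by (simp add: orthogonal_def)
  qed
  have "0 \<notin> ev ` ?E" using evp by force
  then have "independent (ev ` ?E)" using orth pairwise_orthogonal_independent by blast
  then have "finite (ev ` ?E)" by (rule finiteI_independent)
  then show ?thesis using inj finite_imageD by blast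
qed

lemma perron_vec:
  fixes A :: "real^'n^'n"
  assumes sy: "symm A" and nn: "\<And>i j. A$i$j \<ge> 0"
  shows "(\<forall>l\<in>real_eigenvalues A. l \<le> largest_eigenvalue A) \<and>
         (\<exists>x. x \<noteq> 0 \<and> (\<forall>i. x$i \<ge> 0) \<and> A *v x = largest_eigenvalue A *\<^sub>R x)"
proof -
  obtain x0 where n0: "norm x0 = 1" and mx: "\<forall>y. norm y = 1 \<longrightarrow> y \<bullet> (A *v y) \<le> x0 \<bullet> (A *v x0)"
    using rayleigh_max_exists by blast
  define \<mu> where "\<mu> = x0 \<bullet> (A *v x0)"
  have all: "\<And>y. y \<bullet> (A *v y) \<le> \<mu> * (y \<bullet> y)"
    using rayleigh_all[OF n0 mx] unfolding \<mu>_def by blast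
  define xa where "xa = (\<chi> i. \<bar>x0$i\<bar>)"
  have "xa \<bullet> xa = x0 \<bullet> x0" unfolding inner_vec_def xa_def by simp
  then have nxa: "norm xa = 1" using n0 by (simp only: norm_eq_sqrt_inner)
  have q1: "x0 \<bullet> (A *v x0) = (\<Sum>i\<in>UNIV. \<Sum>j\<in>UNIV. x0$i * A$i$j * x0$j)"
    by (simp add: inner_vec_def mv_comp sum_distrib_left mult.assoc)
  have q2: "xa \<bullet> (A *v xa) = (\<Sum>i\<in>UNIV. \<Sum>j\<in>UNIV. xa$i * A$i$j * xa$j)"
    by (simp add: inner_vec_def mv_comp sum_distrib_left mult.assoc)
  have "(\<Sum>i\<in>UNIV. \<Sum>j\<in>UNIV. x0$i * A$i$j * x0$j) \<le> (\<Sum>i\<in>UNIV. \<Sum>j\<in>UNIV. xa$i * A$i$j * xa$j)"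
  proof (intro sum_mono)
    fix i j
    have "x0$i * A$i$j * x0$j \<le> \<bar>x0$i * A$i$j * x0$j\<bar>" by simp
    also have "\<dots> = \<bar>x0$i\<bar> * A$i$j * \<bar>x0$j\<bar>" using nn[of i j] by (simp add: abs_mult)
    finally show "x0$i * A$i$j * x0$j \<le> xa$i * A$i$j * xa$j" by (simp add: xa_def)
  qed
  then have ge: "xa \<bullet> (A *v xa) \<ge> \<mu>" using q1 q2 \<mu>_def by simp
  have "xa \<bullet> (A *v xa) \<le> \<mu>" using mx nxa \<mu>_def by blast
  then have eqm: "xa \<bullet> (A *v xa) = \<mu>" using ge by simp
  have eig: "A *v xa = \<mu> *\<^sub>R xa" by (rule rayleigh_eigen[OF sy nxa all eqm])
  have xa0: "xa \<noteq> 0" using nxa by auto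
  have "xa \<noteq> 0 \<and> A *v xa = \<mu> *\<^sub>R xa" using eig xa0 by simp
  then have muE: "\<mu> \<in> real_eigenvalues A" unfolding real_eigenvalues_def by blast
  have le: "l \<le> \<mu>" if "l \<in> real_eigenvalues A" for l
  proof -
    have "\<exists>v. v \<noteq> 0 \<and> A *v v = l *\<^sub>R v" using that by (simp add: real_eigenvalues_def)
    then obtain v where v: "v \<noteq> 0" "A *v v = l *\<^sub>R v" by blast
    have "v \<bullet> (A *v v) = l * (v \<bullet> v)" using v(2) by (simp add: inner_scaleR_right)
    then have "l * (v \<bullet> v) \<le> \<mu> * (v \<bullet> v)" using all[of v] by linarith
    moreover have "v \<bullet> v > 0" using v(1) by simp
    ultimately show ?thesis using mult_le_cancel_right_pos by blast
  qed
  have lmax: "largest_eigenvalue A = \<mu>"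
    unfolding largest_eigenvalue_def using eig_finite[OF sy] muE le by (intro Max_eqI) auto
  have xan: "\<forall>i. xa$i \<ge> 0" by (simp add: xa_def)
  have "A *v xa = largest_eigenvalue A *\<^sub>R xa" using eig lmax by simp
  then have "\<exists>x. x \<noteq> 0 \<and> (\<forall>i. x$i \<ge> 0) \<and> A *v x = largest_eigenvalue A *\<^sub>R x"
    using xa0 xan by blast
  then show ?thesis using le lmax by simp
qed

locale sgraph =
  fixes E :: "'n::finite \<Rightarrow> 'n \<Rightarrow> bool"
  assumes sg: "simple_graph E" and cg: "connected_graph E"
begin

abbreviation "R \<equiv> edge_rel E"
abbreviation "d \<equiv> gdist E"

lemma E_sym: "E u v \<Longrightarrow> E v u" using sg by (simp add: simple_graph_def)
lemma E_irr: "\<not> E u u" using sg by (simp add: simple_graph_def)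

lemma R_iff[simp]: "(u, v) \<in> R \<longleftrightarrow> E u v" by (simp add: edge_rel_def)

lemma path_ex: "\<exists>k. (u, v) \<in> R ^^ k"
  using cg by (simp add: connected_graph_def rtrancl_power)

lemma path_d: "(u, v) \<in> R ^^ (d u v)"
  unfolding gdist_def using path_ex by (rule LeastI_ex)

lemma d_le: "(u, v) \<in> R ^^ k \<Longrightarrow> d u v \<le> k"
  unfolding gdist_def by (rule Least_le)

lemma d_self[simp]: "d u u = 0"
  using d_le[of u u 0] by simp

lemma d_pos: "u \<noteq> v \<Longrightarrow> d u v \<ge> 1"
  using path_d[of u v] by (cases "d u v") auto

lemma d_one: "E u v \<Longrightarrow> d u v = 1"
proof -
  assume e: "E u v"
  then have "u \<noteq> v" using E_irr by auto
  then have "d u v \<ge> 1" by (rule d_pos)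
  moreover have "d u v \<le> 1" using e by (intro d_le) simp
  ultimately show ?thesis by simp
qed

lemma d_one_E: "d u v = 1 \<Longrightarrow> E u v"
  using path_d[of u v] by simp

lemma d_two: "E u w \<Longrightarrow> E w v \<Longrightarrow> d u v \<le> 2"
proof -
  assume "E u w" "E w v"
  moreover have "(w, v) \<in> R ^^ 1" using \<open>E w v\<close> by simp
  ultimately have "(u, v) \<in> R ^^ Suc 1" using relpow_Suc_I2[of u w R v 1] by simp
  then show ?thesis using d_le by (simp add: numeral_2_eq_2)
qed

lemma pow_sym: "(u, v) \<in> R ^^ k \<Longrightarrow> (v, u) \<in> R ^^ k"
proof (induction k arbitrary: v)
  case 0 then show ?case by auto
next
  case (Suc k)
  then obtain y where "(u, y) \<in> R ^^ k" "(y, v) \<in> R" by (auto elim: relpow_Suc_E)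
  then have "(y, u) \<in> R ^^ k" "(v, y) \<in> R" using Suc.IH E_sym by auto
  then show ?case using relpow_Suc_I2[of v y R u k] by simp
qed

lemma d_sym: "d u v = d v u"
  using d_le[OF pow_sym[OF path_d[of u v]]] d_le[OF pow_sym[OF path_d[of v u]]] by simp

lemma d_ge2: "u \<noteq> v \<Longrightarrow> \<not> E u v \<Longrightarrow> d u v \<ge> 2"
  using d_pos[of u v] d_one_E[of u v] by linarith

definition T :: "'n \<Rightarrow> nat" where "T u = (\<Sum>j\<in>UNIV. d u j)"

lemma transmission_T: "transmission E u = real (T u)"
  by (simp add: transmission_def T_def)

lemma even_sumT: "even (\<Sum>u\<in>UNIV. T u)"
proof -
  have "even (\<Sum>u\<in>A. \<Sum>j\<in>A. d u j)" if "finite A" for A :: "'n set"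
    using that
  proof (induction A rule: finite_induct)
    case empty then show ?case by simp
  next
    case (insert a A)
    have "(\<Sum>u\<in>insert a A. \<Sum>j\<in>insert a A. d u j) =
          (\<Sum>u\<in>A. \<Sum>j\<in>A. d u j) + ((\<Sum>j\<in>A. d a j) + (\<Sum>u\<in>A. d u a))"
      using insert by (simp add: sum.distrib add.assoc add.left_commute)
    also have "(\<Sum>u\<in>A. d u a) = (\<Sum>j\<in>A. d a j)" using d_sym by simp
    finally show ?case using insert by simp
  qed
  then show ?thesis unfolding T_def by simp
qed

definition N :: nat where "N = Max (range T)"

lemma T_le_N: "T u \<le> N" unfolding N_def by simp
lemma N_in: "\<exists>u. T u = N"
proof -
  have "N \<in> range T" unfolding N_def by (rule Max_in) auto
  then show ?thesis by (metis imageE)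
qed

lemma Dmax_N: "Dmax E = real N"
proof -
  obtain u where u: "T u = N" using N_in by blast
  have "real N \<in> range (transmission E)" using u by (metis transmission_T rangeI)
  moreover have "\<forall>y\<in>range (transmission E). y \<le> real N" using T_le_N by (auto simp: transmission_T)
  ultimately show ?thesis unfolding Dmax_def by (intro Max_eqI) auto
qed

lemma nonTR: "\<not> transmission_regular E \<Longrightarrow> \<exists>u. T u < N"
proof -
  assume ntr: "\<not> transmission_regular E"
  show ?thesis
  proof (rule ccontr)
    assume "\<not> (\<exists>u. T u < N)"
    then have all: "\<forall>u. T u = N" using T_le_N le_neq_implies_less by blast
    then have "range (transmission E) = {real N}" by (auto simp: transmission_T)
    then have "Dmax E = Dmin E" by (simp add: Dmax_def Dmin_def)
    then show False using ntr by (simp add: transmission_regular_def)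
  qed
qed

definition Q where "Q = dsl_matrix E"

lemma Q_entry: "Q $ i $ j = real (d i j) + (if i = j then real (T i) else 0)"
  by (simp add: Q_def dsl_matrix_def dist_matrix_def transmission_T)

lemma Q_symm: "symm Q"
  unfolding symm_def
proof (intro allI)
  fix i j
  show "Q $ i $ j = Q $ j $ i" unfolding Q_entry using d_sym[of i j] by auto
qed

lemma Q_nn: "Q $ i $ j \<ge> 0" unfolding Q_entry by simp

lemma Q_mv: "(Q *v x) $ i = real (T i) * x $ i + (\<Sum>j\<in>UNIV. real (d i j) * x $ j)"
proof -
  have "(Q *v x) $ i = (\<Sum>j\<in>UNIV. real (d i j) * x$j + (if i = j then real (T i) * x$j else 0))"
    unfolding mv_comp Q_entry by (intro sum.cong) (auto simp: algebra_simps)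
  also have "\<dots> = (\<Sum>j\<in>UNIV. real (d i j) * x$j) + (\<Sum>j\<in>UNIV. (if i = j then real (T i) * x$j else 0))"
    by (rule sum.distrib)
  also have "(\<Sum>j\<in>UNIV. (if i = j then real (T i) * x$j else 0)) = real (T i) * x $ i"
    by simp
  finally show ?thesis by simp
qed

end

lemma t0_facts:
  fixes n :: real and c :: nat
  assumes n: "n \<ge> 2" and c: "c \<ge> 1"
  defines "t0 \<equiv> (n + 2*real c - sqrt ((n + 2*real c)^2 - 8*real c)) / 2"
  shows "0 < t0" "t0 < 1" "t0 * (n + 2*real c - t0) = 2*real c"
proof -
  define s where "s = sqrt ((n + 2*real c)^2 - 8*real c)"
  have pos: "(n + 2*real c)^2 - 8*real c \<ge> 0"
  proof -
    have eq: "(n + 2*real c)^2 - 8*real c = (n + 2*real c - 2)^2 + 4*(n - 1)" by (simp add: power2_eq_square algebra_simps)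
    have "0 \<le> (n + 2*real c - 2)^2 + 4*(n - 1)" using n by (intro add_nonneg_nonneg) auto
    then show ?thesis by (simp only: eq)
  qed
  have s2: "s^2 = (n + 2*real c)^2 - 8*real c" unfolding s_def using pos by (rule real_sqrt_pow2)
  have s0: "s \<ge> 0" unfolding s_def by (rule real_sqrt_ge_zero) (use pos in simp)
  have "s < n + 2*real c"
  proof -
    have "s^2 < (n + 2*real c)^2" using s2 c by simp
    then show ?thesis using s0 n by (smt (verit) power_mono of_nat_0_le_iff)
  qed
  then show "0 < t0" by (simp add: t0_def s_def[symmetric])
  have "n + 2*real c - 2 < s"
  proof -
    have "(n + 2*real c - 2)^2 < s^2" using s2 n by (simp add: power2_eq_square algebra_simps)
    then show ?thesis using s0 by (smt (verit) power_mono)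
  qed
  then show "t0 < 1" by (simp add: t0_def s_def[symmetric])
  show "t0 * (n + 2*real c - t0) = 2*real c"
    unfolding t0_def s_def[symmetric] using s2 by (simp add: power2_eq_square field_simps)
qed

lemma num_main:
  fixes n tau :: real and c k K :: nat
  assumes n: "n \<ge> 2" and c: "c \<ge> 1" and Kc: "K \<ge> c" and kK: "k \<le> K" and tp: "tau \<ge> 0"
    and h: "tau * (n + 2*real k - tau) \<ge> 2*real K"
  defines "t0 \<equiv> (n + 2*real c - sqrt ((n + 2*real c)^2 - 8*real c)) / 2"
  shows "tau \<ge> t0" and "tau = t0 \<Longrightarrow> k = c \<and> K = c"
proof -
  note tf = t0_facts[OF n c, folded t0_def]
  define s where "s = sqrt ((n + 2*real c)^2 - 8*real c)"
  have s2: "s^2 = (n + 2*real c)^2 - 8*real c"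
  proof -
    have eq: "(n + 2*real c)^2 - 8*real c = (n + 2*real c - 2)^2 + 4*(n - 1)" by (simp add: power2_eq_square algebra_simps)
    have "0 \<le> (n + 2*real c - 2)^2 + 4*(n - 1)" using n by (intro add_nonneg_nonneg) auto
    then have "(n + 2*real c)^2 - 8*real c \<ge> 0" by (simp only: eq)
    then show ?thesis unfolding s_def by (rule real_sqrt_pow2)
  qed
  have s0: "s \<ge> 0" by (simp add: s_def) (use s2 in \<open>smt (verit) zero_le_power2\<close>)
  have key: "tau * (n + 2*real c - tau) \<ge> 2*real c" if t1: "tau \<le> 1"
  proof (cases "k \<le> c")
    case True
    have "tau * (n + 2*real c - tau) = tau * (n + 2*real k - tau) + 2*(real c - real k)*tau" by (simp add: algebra_simps)
    moreover have "2*(real c - real k)*tau \<ge> 0" using True tp by simp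
    moreover have "real K \<ge> real c" using Kc by simp
    ultimately show ?thesis using h by linarith
  next
    case False
    have A: "tau * (n + 2*real c - tau) = tau * (n + 2*real k - tau) - 2*(real k - real c)*tau" by (simp add: algebra_simps)
    have C: "2*(real k - real c)*tau \<le> 2*real k - 2*real c" using False t1 by (simp add: mult_left_le)
    have K: "real k \<le> real K" using kK by simp
    have aux: "(A::real) = B - C \<Longrightarrow> C \<le> 2*k' - 2*c' \<Longrightarrow> k' \<le> K' \<Longrightarrow> 2*K' \<le> B \<Longrightarrow> 2*c' \<le> A"
      for A B C k' c' K' by linarith
    show ?thesis by (rule aux[OF A C K h])
  qed
  show ge: "tau \<ge> t0"
  proof (cases "tau \<le> 1")
    case False then show ?thesis using tf by linarith
  next
    case True
    have "(n + 2*real c - 2*tau)^2 \<le> s^2"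
      using key[OF True] s2 by (simp add: power2_eq_square algebra_simps)
    then have "n + 2*real c - 2*tau \<le> s" using s0 by (rule power2_le_imp_le)
    then show ?thesis by (simp add: t0_def s_def[symmetric])
  qed
  show "k = c \<and> K = c" if eq: "tau = t0"
  proof -
    have t1: "tau < 1" "tau > 0" "tau * (n + 2*real c - tau) = 2*real c" using tf eq by auto
    show ?thesis
    proof (cases "k \<le> c")
      case True
      have "tau * (n + 2*real c - tau) = tau * (n + 2*real k - tau) + 2*(real c - real k)*tau" by (simp add: algebra_simps)
      then have A: "2*(real c - real k)*tau + 2*real K \<le> 2*real c" using h t1 by linarith
      have "2*(real c - real k)*tau \<ge> 0" using True tp by simp
      then have "real K \<le> real c" using A by linarith
      then have K: "K = c" using Kc by simp
      then have RK: "real K = real c" by simp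
      have X: "2*(real c - real k)*tau \<le> 0" using A RK by linarith
      have "real c \<le> real k"
      proof (rule ccontr)
        assume "\<not> real c \<le> real k"
        then have "real c - real k > 0" by simp
        then have "2*(real c - real k)*tau > 0" using t1(2) by simp
        then show False using X by linarith
      qed
      then have "real c - real k \<le> 0" by simp
      then show ?thesis using True K by simp
    next
      case False
      have "tau * (n + 2*real c - tau) = tau * (n + 2*real k - tau) - 2*(real k - real c)*tau" by (simp add: algebra_simps)
      then have "2*real k - 2*(real k - real c)*tau \<le> 2*real c" using h t1 kK by (smt (verit) of_nat_le_iff)
      then have "(real k - real c) * (1 - tau) \<le> 0" by (simp add: algebra_simps)
      moreover have "(real k - real c) * (1 - tau) > 0" using False t1 by simp
      ultimately show ?thesis by simp
    qed
  qed
qed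

context sgraph begin

definition rho where "rho = largest_eigenvalue Q"

lemma tau_eq: "tau E = 2 * real N - rho"
  by (simp add: tau_def Dmax_N dsl_spectral_radius_def rho_def Q_def)

lemma perron: "\<exists>x. x \<noteq> 0 \<and> (\<forall>i. x$i \<ge> 0) \<and> Q *v x = rho *\<^sub>R x"
  using perron_vec[OF Q_symm Q_nn] unfolding rho_def by blast

lemma rho_ge: "l \<in> real_eigenvalues Q \<Longrightarrow> l \<le> rho"
  using perron_vec[OF Q_symm Q_nn] unfolding rho_def by blast

lemma sum_d_col: "(\<Sum>i\<in>UNIV. real (d i j)) = real (T j)"
  unfolding T_def using d_sym by (simp add: of_nat_sum)

lemma sum_d_row: "(\<Sum>j\<in>UNIV. real (d i j)) = real (T i)"
  unfolding T_def by (simp add: of_nat_sum)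

context
  fixes x :: "real^'n"
  assumes eig: "Q *v x = rho *\<^sub>R x"
begin

lemma eig_comp: "rho * x$i = real (T i) * x $ i + (\<Sum>j\<in>UNIV. real (d i j) * x $ j)"
proof -
  have "(Q *v x) $ i = rho * x $ i" using eig by simp
  then show ?thesis using Q_mv[of x i] by simp
qed

lemma sum_identity: "rho * (\<Sum>i\<in>UNIV. x$i) = 2 * (\<Sum>i\<in>UNIV. real (T i) * x$i)"
proof -
  have "rho * (\<Sum>i\<in>UNIV. x$i) = (\<Sum>i\<in>UNIV. rho * x$i)" by (simp add: sum_distrib_left)
  also have "\<dots> = (\<Sum>i\<in>UNIV. real (T i) * x $ i + (\<Sum>j\<in>UNIV. real (d i j) * x $ j))"
    using eig_comp by simp
  also have "\<dots> = (\<Sum>i\<in>UNIV. real (T i) * x $ i) + (\<Sum>i\<in>UNIV. \<Sum>j\<in>UNIV. real (d i j) * x $ j)"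
    by (rule sum.distrib)
  also have "(\<Sum>i\<in>UNIV. \<Sum>j\<in>UNIV. real (d i j) * x $ j) = (\<Sum>j\<in>UNIV. \<Sum>i\<in>UNIV. real (d i j) * x $ j)"
    by (rule sum.swap)
  also have "\<dots> = (\<Sum>j\<in>UNIV. real (T j) * x $ j)"
    by (simp add: sum_distrib_right[symmetric] sum_d_col)
  finally show ?thesis by simp
qed

definition gap where "gap i j = real (d i j) * x$j - x$j - (real (d i j) - 1) * x$i"

lemma gap_eq: "gap i j = (real (d i j) - 1) * (x$j - x$i)"
  unfolding gap_def by (simp add: algebra_simps)

lemma gap_nn: assumes mi: "\<forall>l. x$i \<le> x$l" shows "gap i j \<ge> 0"
proof (cases "j = i")
  case True then show ?thesis by (simp add: gap_def)
next
  case False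
  then have "real (d i j) \<ge> 1" using d_pos[of i j] by simp
  moreover have "x$j - x$i \<ge> 0" using mi by simp
  ultimately have "(real (d i j) - 1) * (x$j - x$i) \<ge> 0" by simp
  then show ?thesis by (simp add: gap_def algebra_simps)
qed

lemma gap_sum: "(\<Sum>j\<in>UNIV. gap i j) =
   (\<Sum>j\<in>UNIV. real (d i j) * x$j) - (\<Sum>j\<in>UNIV. x$j) - (real (T i) - real CARD('n)) * x$i"
proof -
  have "(\<Sum>j\<in>UNIV. gap i j) = (\<Sum>j\<in>UNIV. real (d i j) * x$j) - (\<Sum>j\<in>UNIV. x$j)
      - (\<Sum>j\<in>UNIV. (real (d i j) - 1) * x$i)"
    unfolding gap_def by (simp add: sum_subtractf)
  also have "(\<Sum>j\<in>UNIV. (real (d i j) - 1) * x$i) = (real (T i) - real CARD('n)) * x$i"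
    by (simp add: sum_distrib_right[symmetric] sum_subtractf sum_d_row)
  finally show ?thesis .
qed

lemma min_bound:
  assumes mi: "\<forall>l. x$i \<le> x$l"
  shows "(\<Sum>j\<in>UNIV. x$j) + (\<Sum>j\<in>UNIV. gap i j) = (rho - 2 * real (T i) + real CARD('n)) * x$i"
    and "(\<Sum>j\<in>UNIV. x$j) \<le> (rho - 2 * real (T i) + real CARD('n)) * x$i"
proof -
  show eq: "(\<Sum>j\<in>UNIV. x$j) + (\<Sum>j\<in>UNIV. gap i j) = (rho - 2 * real (T i) + real CARD('n)) * x$i"
    using eig_comp[of i] gap_sum[of i] by (simp add: algebra_simps)
  have "(\<Sum>j\<in>UNIV. gap i j) \<ge> 0" using gap_nn[OF mi] by (simp add: sum_nonneg)
  then show "(\<Sum>j\<in>UNIV. x$j) \<le> (rho - 2 * real (T i) + real CARD('n)) * x$i" using eq by linarith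
qed

end

lemma main_bound:
  fixes c :: nat
  assumes c: "c \<ge> 1" and Kc: "(\<Sum>j\<in>UNIV. N - T j) \<ge> c" and n2: "CARD('n) \<ge> 2"
  defines "t0 \<equiv> (real CARD('n) + 2*real c - sqrt ((real CARD('n) + 2*real c)^2 - 8*real c)) / 2"
  shows "tau E \<ge> t0"
    and "tau E = t0 \<Longrightarrow> \<exists>i. (\<forall>j. j \<noteq> i \<longrightarrow> E i j) \<and> T i + c = N \<and> (\<forall>j. j \<noteq> i \<longrightarrow> T j = N)"
proof -
  obtain x where x0: "x \<noteq> 0" and xn: "\<forall>i. x$i \<ge> 0" and eig: "Q *v x = rho *\<^sub>R x"
    using perron by blast
  define S where "S = (\<Sum>j\<in>UNIV. x$j)"
  define n where "n = real CARD('n)"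
  have Spos: "S > 0"
  proof -
    obtain j where "x$j \<noteq> 0" using x0 by (metis vec_eq_iff zero_index)
    then have "x$j > 0" using xn by (metis order.not_eq_order_implies_strict)
    moreover have "x$j \<le> S" unfolding S_def using xn by (intro member_le_sum) auto
    ultimately show ?thesis by simp
  qed
  have "Min (range (\<lambda>j. x$j)) \<in> range (\<lambda>j. x$j)" by (rule Min_in) auto
  then obtain i where ieq: "x$i = Min (range (\<lambda>j. x$j))" by (metis imageE)
  have mi: "\<forall>l. x$i \<le> x$l" unfolding ieq by simp
  define k where "k j = N - T j" for j
  define K where "K = (\<Sum>j\<in>UNIV. k j)"
  define \<tau> where "\<tau> = tau E"
  have rk: "real (k j) = real N - real (T j)" for j unfolding k_def using T_le_N[of j] by (simp add: of_nat_diff)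
  have rho_eq: "rho = 2 * real N - \<tau>" using tau_eq by (simp add: \<tau>_def)
  have C1: "\<tau> * S = 2 * (\<Sum>j\<in>UNIV. real (k j) * x$j)"
  proof -
    have te: "\<tau> = 2 * real N - rho" using rho_eq by simp
    have "\<tau> * S = 2 * real N * S - rho * S" unfolding te by (rule left_diff_distrib)
    also have "rho * S = 2 * (\<Sum>j\<in>UNIV. real (T j) * x$j)" unfolding S_def by (rule sum_identity[OF eig])
    also have "2 * real N * S = 2 * (\<Sum>j\<in>UNIV. real N * x$j)" by (simp add: S_def sum_distrib_left mult.assoc)
    finally show ?thesis by (simp add: rk algebra_simps sum_subtractf)
  qed
  have lowK: "(\<Sum>j\<in>UNIV. real (k j) * x$j) \<ge> real K * x$i"
  proof -
    have "(\<Sum>j\<in>UNIV. real (k j) * x$j) \<ge> (\<Sum>j\<in>UNIV. real (k j) * x$i)"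
      using mi by (intro sum_mono mult_left_mono) auto
    also have "(\<Sum>j\<in>UNIV. real (k j) * x$i) = real K * x$i"
      by (simp add: K_def sum_distrib_right[symmetric])
    finally show ?thesis .
  qed
  have xin: "x$i \<ge> 0" using xn by simp
  have "\<tau> * S \<ge> 0" using C1 lowK xin by (smt (verit) of_nat_0_le_iff mult_nonneg_nonneg)
  then have tp: "\<tau> \<ge> 0" using Spos by (simp add: zero_le_mult_iff)
  have coef: "rho - 2 * real (T i) + real CARD('n) = n + 2 * real (k i) - \<tau>"
    using rho_eq rk[of i] by (simp add: n_def)
  have C2: "S \<le> (n + 2 * real (k i) - \<tau>) * x$i"
    using min_bound(2)[OF eig mi] unfolding coef S_def .
  have mpos: "x$i > 0"
  proof (rule ccontr)
    assume "\<not> x$i > 0"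
    then have "x$i = 0" using xin by simp
    then show False using C2 Spos by simp
  qed
  have chain: "2 * real K * x$i \<le> \<tau> * S" using C1 lowK by simp
  have chain2: "\<tau> * S \<le> \<tau> * ((n + 2 * real (k i) - \<tau>) * x$i)" using C2 tp by (rule mult_left_mono)
  have hh: "\<tau> * (n + 2 * real (k i) - \<tau>) \<ge> 2 * real K"
  proof -
    have "2 * real K * x$i \<le> (\<tau> * (n + 2 * real (k i) - \<tau>)) * x$i" using chain chain2 by (simp add: mult.assoc)
    then show ?thesis using mpos by simp
  qed
  have kiK: "k i \<le> K" unfolding K_def by (rule member_le_sum) auto
  have KC: "K \<ge> c" using Kc by (simp add: K_def k_def)
  have n2': "n \<ge> 2" using n2 by (simp add: n_def)
  note NM = num_main[OF n2' c KC kiK tp hh]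
  show "tau E \<ge> t0" using NM(1) by (simp add: \<tau>_def t0_def n_def)
  assume eqt: "tau E = t0"
  then have eqt': "\<tau> = (n + 2*real c - sqrt ((n + 2*real c)^2 - 8*real c)) / 2"
    by (simp add: \<tau>_def t0_def n_def)
  have kc: "k i = c" and Kc2: "K = c" using NM(2)[OF eqt'] by auto
  note TF = t0_facts[OF n2' c, folded eqt']
  have others: "k j = 0" if "j \<noteq> i" for j
  proof -
    have "K = k i + (\<Sum>j\<in>UNIV - {i}. k j)" unfolding K_def by (simp add: sum.remove)
    then have "(\<Sum>j\<in>UNIV - {i}. k j) = 0" using kc Kc2 by simp
    then show ?thesis using that by simp
  qed
  have Tj: "T j = N" if "j \<noteq> i" for j using others[OF that] T_le_N[of j] by (simp add: k_def)
  have Ti: "T i + c = N" using kc T_le_N[of i] by (simp add: k_def)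
  have Seq: "S = (n + 2 * real (k i) - \<tau>) * x$i"
  proof -
    have "\<tau> * ((n + 2 * real (k i) - \<tau>) * x$i) = 2 * real K * x$i"
      using TF(3) kc Kc2 by (simp add: mult.assoc[symmetric])
    then have "\<tau> * S = \<tau> * ((n + 2 * real (k i) - \<tau>) * x$i)" using chain chain2 by linarith
    then show ?thesis using TF(1) by simp
  qed
  have gap0: "(\<Sum>j\<in>UNIV. gap x i j) = 0"
    using min_bound(1)[OF eig mi] Seq unfolding coef S_def by simp
  have gapj: "gap x i j = 0" for j
    using gap0 gap_nn[OF eig mi] by (simp add: sum_nonneg_eq_0_iff)
  have adj: "E i j" if ji: "j \<noteq> i" for j
  proof (rule ccontr)
    assume ne: "\<not> E i j"
    have d2: "real (d i j) \<ge> 2" using d_ge2[of i j] ji ne by simp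
    have ge: "gap x i j = (real (d i j) - 1) * (x$j - x$i)" by (rule gap_eq[OF eig])
    have "(real (d i j) - 1) * (x$j - x$i) = 0" using gapj[of j] unfolding ge .
    then have xj: "x$j = x$i" using d2 by simp
    have mj: "\<forall>l. x$j \<le> x$l" using mi xj by simp
    have "S \<le> (rho - 2 * real (T j) + n) * x$j" using min_bound(2)[OF eig mj] by (simp add: S_def n_def)
    also have "\<dots> = (n - \<tau>) * x$i" using Tj[OF ji] rho_eq xj by simp
    finally have "S \<le> (n - \<tau>) * x$i" .
    moreover have "S = (n - \<tau>) * x$i + 2 * real c * x$i" using Seq kc by (simp add: algebra_simps)
    moreover have "2 * real c * x$i > 0" using c mpos by simp
    ultimately show False by linarith
  qed
  show "\<exists>i. (\<forall>j. j \<noteq> i \<longrightarrow> E i j) \<and> T i + c = N \<and> (\<forall>j. j \<noteq> i \<longrightarrow> T j = N)"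
    using adj Ti Tj by blast
qed

lemma T_univ: assumes univ: "\<forall>j. j \<noteq> i \<longrightarrow> E i j" shows "T i = CARD('n) - 1"
proof -
  have "T i = d i i + (\<Sum>j\<in>UNIV - {i}. d i j)" unfolding T_def by (rule sum.remove) auto
  then have "T i = (\<Sum>j\<in>UNIV - {i}. d i j)" by simp
  also have "(\<Sum>j\<in>UNIV - {i}. d i j) = (\<Sum>j\<in>UNIV - {i}. 1)"
    using univ d_one by (intro sum.cong) auto
  finally show ?thesis by (simp add: card_Diff_singleton)
qed

lemma exists_other: assumes "CARD('n) \<ge> 2" shows "\<exists>j::'n. j \<noteq> i"
proof (rule ccontr)
  assume "\<not> (\<exists>j::'n. j \<noteq> i)"
  then have eq: "(UNIV::'n set) = {i}" by auto
  have "card (UNIV::'n set) = card {i}" by (simp only: eq)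
  then show False using assms by simp
qed

lemma eig_lower:
  fixes c :: nat
  assumes n2: "CARD('n) \<ge> 2" and c: "c \<ge> 1" and univ: "\<forall>j. j \<noteq> i \<longrightarrow> E i j"
    and Tj: "\<forall>j. j \<noteq> i \<longrightarrow> T j = CARD('n) - 1 + c"
  defines "t0 \<equiv> (real CARD('n) + 2*real c - sqrt ((real CARD('n) + 2*real c)^2 - 8*real c)) / 2"
  shows "tau E \<le> t0"
proof -
  define n where "n = real CARD('n)"
  have n2': "n \<ge> 2" using n2 by (simp add: n_def)
  note TF = t0_facts[OF n2' c, folded n_def, folded t0_def[folded n_def]]
  have Ti: "T i = CARD('n) - 1" by (rule T_univ[OF univ])
  obtain j0 where j0: "j0 \<noteq> i" using exists_other[OF n2] by blast
  have NN: "N = CARD('n) - 1 + c"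
  proof -
    obtain u where u: "T u = N" using N_in by blast
    have "T j0 \<le> N" by (rule T_le_N)
    then show ?thesis using u Tj j0 Ti c n2 by (cases "u = i") auto
  qed
  have rN: "real N = n - 1 + real c" using NN n2 by (simp add: n_def of_nat_diff)
  have rTi: "real (T i) = n - 1" using Ti n2 by (simp add: n_def of_nat_diff)
  define y :: "real^'n" where "y = (\<chi> l. if l = i then 1 - t0 else 1)"
  have sumy: "(\<Sum>l\<in>UNIV. real (d j l) * y$l) = real (T j) - t0 * real (d j i)" for j
  proof -
    have "(\<Sum>l\<in>UNIV. real (d j l) * y$l) = (\<Sum>l\<in>UNIV. real (d j l) - (if l = i then t0 * real (d j i) else 0))"
      by (intro sum.cong) (auto simp: y_def algebra_simps)
    also have "\<dots> = (\<Sum>l\<in>UNIV. real (d j l)) - t0 * real (d j i)"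
      by (simp add: sum_subtractf)
    finally show ?thesis by (simp add: sum_d_row)
  qed
  have ev: "Q *v y = (2 * real N - t0) *\<^sub>R y"
  proof (rule iffD2[OF vec_eq_iff], rule allI)
    fix j
    show "(Q *v y) $ j = ((2 * real N - t0) *\<^sub>R y) $ j"
    proof (cases "j = i")
      case True
      have "(Q *v y) $ j = real (T i) * (1 - t0) + real (T i)"
        using Q_mv[of y j] sumy[of j] True by (simp add: y_def)
      also have "\<dots> = (2 * real N - t0) * (1 - t0)"
        unfolding rTi rN using TF(3) by (simp add: algebra_simps power2_eq_square)
      finally show ?thesis using True by (simp add: y_def)
    next
      case False
      have dji: "d j i = 1" using univ False d_one E_sym by metis
      have "(Q *v y) $ j = real (T j) + real (T j) - t0"
        using Q_mv[of y j] sumy[of j] False dji by (simp add: y_def)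
      also have "real (T j) = real N" using Tj False NN by simp
      finally show ?thesis using False by (simp add: y_def)
    qed
  qed
  have "y \<noteq> 0"
  proof
    assume "y = 0"
    then have "y $ j0 = 0" by simp
    then show False using j0 by (simp add: y_def)
  qed
  then have "2 * real N - t0 \<in> real_eigenvalues Q" using ev unfolding real_eigenvalues_def by blast
  then have "2 * real N - t0 \<le> rho" by (rule rho_ge)
  then show ?thesis using tau_eq by simp
qed

lemma T_struct:
  assumes univ: "\<forall>j. j \<noteq> i \<longrightarrow> E i j" and ji: "j \<noteq> i"
  shows "T j = CARD('n) - 1 + card {l. l \<noteq> j \<and> \<not> E j l}"
proof -
  let ?B = "{l. l \<noteq> j \<and> \<not> E j l}"
  have dv: "d j l = (if l = j then 0 else if E j l then 1 else 2)" for l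
  proof -
    consider "l = j" | "l \<noteq> j" "E j l" | "l \<noteq> j" "\<not> E j l" by blast
    then show ?thesis
    proof cases
      case 1 then show ?thesis by simp
    next
      case 2 then show ?thesis using d_one by simp
    next
      case 3
      then have li: "l \<noteq> i" using univ E_sym ji by metis
      have "E j i" using univ ji E_sym by metis
      moreover have "E i l" using univ li by simp
      ultimately have "d j l \<le> 2" by (rule d_two)
      moreover have "d j l \<ge> 2" using d_ge2 3 by simp
      ultimately show ?thesis using 3 by simp
    qed
  qed
  have "T j = (\<Sum>l\<in>UNIV. (if l = j then 0 else 1) + (if l \<in> ?B then 1 else 0))"
    unfolding T_def by (intro sum.cong) (auto simp: dv)
  also have "\<dots> = (\<Sum>l\<in>UNIV. (if l = j then 0 else 1::nat)) + (\<Sum>l\<in>UNIV. (if l \<in> ?B then 1 else 0))"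
    by (rule sum.distrib)
  also have "(\<Sum>l\<in>UNIV. (if l = j then 0 else 1::nat)) = CARD('n) - 1"
  proof -
    have "(\<Sum>l\<in>UNIV. (if l = j then 0 else 1::nat)) = (\<Sum>l\<in>UNIV - {j}. 1)"
      by (simp add: sum.If_cases Diff_eq[symmetric] Compl_eq_Diff_UNIV)
    then show ?thesis by (simp add: card_Diff_singleton)
  qed
  also have "(\<Sum>l\<in>UNIV. (if l \<in> ?B then 1 else 0::nat)) = card ?B"
    by (simp add: sum.If_cases)
  finally show ?thesis .
qed

lemma K_ge1: assumes "\<not> transmission_regular E" shows "(\<Sum>j\<in>UNIV. N - T j) \<ge> 1"
proof -
  obtain u where u: "T u < N" using nonTR[OF assms] by blast
  have "N - T u \<le> (\<Sum>j\<in>UNIV. N - T j)" by (rule member_le_sum) auto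
  then show ?thesis using u by simp
qed

lemma K_even: assumes "even CARD('n)" shows "even (\<Sum>j\<in>UNIV. N - T j)"
proof -
  have "(\<Sum>j\<in>UNIV. N - T j) = (\<Sum>j\<in>(UNIV::'n set). N) - (\<Sum>j\<in>UNIV. T j)"
    using sum_subtractf_nat[of UNIV T "\<lambda>_. N"] T_le_N by simp
  moreover have "even (\<Sum>j\<in>(UNIV::'n set). N)" using assms by simp
  ultimately show ?thesis using even_sumT by simp
qed

lemma card_ge3: assumes "\<not> transmission_regular E" shows "CARD('n) \<ge> 3"
proof (rule ccontr)
  assume "\<not> CARD('n) \<ge> 3"
  then have le: "CARD('n) \<le> 2" by simp
  obtain u where u: "T u < N" using nonTR[OF assms] by blast
  obtain v where v: "T v = N" using N_in by blast
  have uv: "u \<noteq> v" using u v by auto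
  have "card {u, v} = 2" using uv by simp
  moreover have "card {u, v} \<le> CARD('n)" by (rule card_mono) auto
  ultimately have "{u, v} = (UNIV :: 'n set)" using le by (intro card_subset_eq) auto
  then have eqU: "(UNIV :: 'n set) = {u, v}" by simp
  have "T u = (\<Sum>j\<in>{u,v}. d u j)" "T v = (\<Sum>j\<in>{u,v}. d v j)" unfolding T_def by (simp_all only: eqU)
  then have "T u = d u u + d u v" "T v = d v u + d v v" using uv by simp_all
  then have "T u = T v" using d_sym by simp
  then show False using u v by simp
qed

lemma structure_iff:
  fixes c :: nat
  assumes c: "c \<ge> 1" and Kc: "(\<Sum>j\<in>UNIV. N - T j) \<ge> c" and n2: "CARD('n) \<ge> 2"
  defines "t0 \<equiv> (real CARD('n) + 2*real c - sqrt ((real CARD('n) + 2*real c)^2 - 8*real c)) / 2"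
  shows "tau E \<ge> t0"
    and "tau E = t0 \<longleftrightarrow> (\<exists>i. (\<forall>j. j \<noteq> i \<longrightarrow> E i j) \<and> (\<forall>j. j \<noteq> i \<longrightarrow> card {l. l \<noteq> j \<and> \<not> E j l} = c))"
proof -
  show ge: "tau E \<ge> t0" using main_bound(1)[OF c Kc n2] by (simp add: t0_def)
  show "tau E = t0 \<longleftrightarrow> (\<exists>i. (\<forall>j. j \<noteq> i \<longrightarrow> E i j) \<and> (\<forall>j. j \<noteq> i \<longrightarrow> card {l. l \<noteq> j \<and> \<not> E j l} = c))"
  proof
    assume "tau E = t0"
    then obtain i where univ: "\<forall>j. j \<noteq> i \<longrightarrow> E i j" and Ti: "T i + c = N" and Tj: "\<forall>j. j \<noteq> i \<longrightarrow> T j = N"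
      using main_bound(2)[OF c Kc n2] by (auto simp: t0_def)
    have "T i = CARD('n) - 1" by (rule T_univ[OF univ])
    then have "card {l. l \<noteq> j \<and> \<not> E j l} = c" if "j \<noteq> i" for j
      using T_struct[OF univ that] Tj that Ti n2 by simp
    then show "\<exists>i. (\<forall>j. j \<noteq> i \<longrightarrow> E i j) \<and> (\<forall>j. j \<noteq> i \<longrightarrow> card {l. l \<noteq> j \<and> \<not> E j l} = c)"
      using univ by blast
  next
    assume "\<exists>i. (\<forall>j. j \<noteq> i \<longrightarrow> E i j) \<and> (\<forall>j. j \<noteq> i \<longrightarrow> card {l. l \<noteq> j \<and> \<not> E j l} = c)"
    then obtain i where univ: "\<forall>j. j \<noteq> i \<longrightarrow> E i j" and cd: "\<forall>j. j \<noteq> i \<longrightarrow> card {l. l \<noteq> j \<and> \<not> E j l} = c"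
      by blast
    have "\<forall>j. j \<noteq> i \<longrightarrow> T j = CARD('n) - 1 + c" using T_struct[OF univ] cd by simp
    then have "tau E \<le> t0" using eig_lower[OF n2 c univ] by (simp add: t0_def)
    then show "tau E = t0" using ge by simp
  qed
qed

end

lemma K122_partner:
  fixes b n :: nat
  assumes "1 \<le> b" "b < n" "odd n"
  defines "p \<equiv> (if odd b then b + 1 else b - 1)"
  shows "p < n" "p \<noteq> b" "(p + 1) div 2 = (b + 1) div 2"
    "\<And>a. (a + 1) div 2 = (b + 1) div 2 \<Longrightarrow> a \<noteq> b \<Longrightarrow> a = p"
proof -
  show "p < n" using assms by (cases "odd b") (auto simp: p_def, presburger)
  show "p \<noteq> b" using assms by (auto simp: p_def)
  show "(p + 1) div 2 = (b + 1) div 2" using assms by (auto simp: p_def elim!: oddE evenE)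
  show "a = p" if "(a + 1) div 2 = (b + 1) div 2" "a \<noteq> b" for a
    using that assms unfolding p_def by (cases "odd b"; cases "odd a") (auto elim!: oddE evenE)
qed

context sgraph begin

lemma deg_univ: "degree E v = CARD('n) - 1 \<longleftrightarrow> (\<forall>j. j \<noteq> v \<longrightarrow> E v j)"
proof
  have sub: "{u. E v u} \<subseteq> UNIV - {v}" using E_irr by auto
  assume "degree E v = CARD('n) - 1"
  then have "card {u. E v u} = card (UNIV - {v})" by (simp add: degree_def card_Diff_singleton)
  then have "{u. E v u} = UNIV - {v}" using sub by (intro card_subset_eq) auto
  then show "\<forall>j. j \<noteq> v \<longrightarrow> E v j" by auto
next
  assume "\<forall>j. j \<noteq> v \<longrightarrow> E v j"
  then have "{u. E v u} = UNIV - {v}" using E_irr by auto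
  then show "degree E v = CARD('n) - 1" by (simp add: degree_def card_Diff_singleton)
qed

lemma card_split:
  assumes univ: "\<forall>j. j \<noteq> v \<longrightarrow> E v j" and wv: "w \<noteq> v"
  shows "card {u. u \<noteq> v \<and> E w u} + card {l. l \<noteq> w \<and> \<not> E w l} + 2 = CARD('n)"
proof -
  let ?A = "{u. u \<noteq> v \<and> E w u}" and ?B = "{l. l \<noteq> w \<and> \<not> E w l}"
  have ewv: "E w v" using univ wv E_sym by metis
  have un: "?A \<union> ?B = UNIV - {v, w}" using ewv E_irr by auto
  have "card (?A \<union> ?B) = card ?A + card ?B" by (rule card_Un_disjoint) auto
  moreover have "card (UNIV - {v, w}) + 2 = CARD('n)"
  proof -
    have "card (UNIV - {v, w}) = CARD('n) - card {v, w}" by (rule card_Diff_subset) auto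
    moreover have "card {v, w} = 2" using wv by simp
    moreover have "card {v, w} \<le> CARD('n)" by (rule card_mono) auto
    ultimately show ?thesis by simp
  qed
  ultimately show ?thesis using un by simp
qed

lemma dvdr_iff:
  assumes n4: "CARD('n) \<ge> 4"
  shows "DVDR (CARD('n) - 4) E \<longleftrightarrow>
    (\<exists>i. (\<forall>j. j \<noteq> i \<longrightarrow> E i j) \<and> (\<forall>j. j \<noteq> i \<longrightarrow> card {l. l \<noteq> j \<and> \<not> E j l} = 2))"
proof
  assume "DVDR (CARD('n) - 4) E"
  then obtain v where dv: "degree E v = CARD('n) - 1"
      and r: "\<forall>w. w \<noteq> v \<longrightarrow> card {u. u \<noteq> v \<and> E w u} = CARD('n) - 4"
    unfolding DVDR_def by blast
  have univ: "\<forall>j. j \<noteq> v \<longrightarrow> E v j" using dv deg_univ by blast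
  have "card {l. l \<noteq> j \<and> \<not> E j l} = 2" if "j \<noteq> v" for j
    using card_split[OF univ that] r that n4 by simp
  then show "\<exists>i. (\<forall>j. j \<noteq> i \<longrightarrow> E i j) \<and> (\<forall>j. j \<noteq> i \<longrightarrow> card {l. l \<noteq> j \<and> \<not> E j l} = 2)"
    using univ by blast
next
  assume "\<exists>i. (\<forall>j. j \<noteq> i \<longrightarrow> E i j) \<and> (\<forall>j. j \<noteq> i \<longrightarrow> card {l. l \<noteq> j \<and> \<not> E j l} = 2)"
  then obtain v where univ: "\<forall>j. j \<noteq> v \<longrightarrow> E v j"
      and cd: "\<forall>j. j \<noteq> v \<longrightarrow> card {l. l \<noteq> j \<and> \<not> E j l} = 2" by blast
  have "degree E v = CARD('n) - 1" using univ deg_univ by blast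
  moreover have "card {u. u \<noteq> v \<and> E w u} = CARD('n) - 4" if "w \<noteq> v" for w
    using card_split[OF univ that] cd that by simp
  ultimately show "DVDR (CARD('n) - 4) E" unfolding DVDR_def using cg by blast
qed

lemma iso_imp_struct:
  assumes odd: "odd CARD('n)" and iso: "iso_K122 E"
  shows "\<exists>i. (\<forall>j. j \<noteq> i \<longrightarrow> E i j) \<and> (\<forall>j. j \<noteq> i \<longrightarrow> card {l. l \<noteq> j \<and> \<not> E j l} = 1)"
proof -
  obtain f where bij: "bij_betw f (UNIV :: 'n set) {0..<CARD('n)}" and adj: "\<forall>u v. E u v \<longleftrightarrow> K122_adj (f u) (f v)"
    using iso unfolding iso_K122_def by blast
  have inj: "inj f" using bij by (simp add: bij_betw_def)
  have img: "f ` UNIV = {0..<CARD('n)}" using bij by (simp add: bij_betw_def)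
  have "0 \<in> f ` UNIV" using img by simp
  then obtain i where fi: "f i = 0" by auto
  have fj: "f j \<ge> 1" if "j \<noteq> i" for j
  proof (rule ccontr)
    assume "\<not> f j \<ge> 1"
    then have "f j = f i" using fi by simp
    then show False using inj that by (metis injD)
  qed
  have univ: "\<forall>j. j \<noteq> i \<longrightarrow> E i j"
  proof (intro allI impI)
    fix j assume "j \<noteq> i"
    then have "f j \<ge> 1" by (rule fj)
    then show "E i j" using adj fi by (simp add: K122_adj_def)
  qed
  have "card {l. l \<noteq> j \<and> \<not> E j l} = 1" if ji: "j \<noteq> i" for j
  proof -
    define b where "b = f j"
    have b1: "1 \<le> b" using fj[OF ji] by (simp add: b_def)
    have bn: "b < CARD('n)" using img b_def by auto
    define p where "p = (if odd b then b + 1 else b - 1)"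
    note PP = K122_partner[OF b1 bn odd, folded p_def]
    have "p \<in> f ` UNIV" using img PP(1) by simp
    then obtain l0 where fl0: "f l0 = p" by auto
    have "{l. l \<noteq> j \<and> \<not> E j l} = {l0}"
    proof (intro set_eqI iffI)
      fix l assume "l \<in> {l. l \<noteq> j \<and> \<not> E j l}"
      then have lj: "l \<noteq> j" and ne: "\<not> E j l" by auto
      have "(f l + 1) div 2 = (b + 1) div 2" using ne adj by (simp add: K122_adj_def b_def)
      moreover have "f l \<noteq> b" using lj inj b_def by (metis injD)
      ultimately have "f l = p" using PP(4) by blast
      then show "l \<in> {l0}" using fl0 inj by (metis injD singletonI)
    next
      fix l assume "l \<in> {l0}"
      then have l: "l = l0" by simp
      have "l0 \<noteq> j" using fl0 PP(2) b_def by auto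
      moreover have "\<not> E j l0" using adj fl0 PP(3) by (simp add: K122_adj_def b_def)
      ultimately show "l \<in> {l. l \<noteq> j \<and> \<not> E j l}" using l by simp
    qed
    then show ?thesis by simp
  qed
  then show ?thesis using univ by blast
qed

lemma struct_imp_iso:
  assumes univ: "\<forall>j. j \<noteq> i \<longrightarrow> E i j"
    and cd: "\<forall>j. j \<noteq> i \<longrightarrow> card {l. l \<noteq> j \<and> \<not> E j l} = 1"
  shows "iso_K122 E"
proof -
  define \<sigma> where "\<sigma> j = (SOME l. l \<noteq> j \<and> \<not> E j l)" for j
  have single: "\<exists>l. {l. l \<noteq> j \<and> \<not> E j l} = {l}" if "j \<noteq> i" for j
    using cd that by (simp add: card_1_singleton_iff)
  have s1: "\<sigma> j \<noteq> j \<and> \<not> E j (\<sigma> j)" if ji: "j \<noteq> i" for j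
  proof -
    obtain l where "{l. l \<noteq> j \<and> \<not> E j l} = {l}" using single[OF ji] by blast
    then have "\<exists>l. l \<noteq> j \<and> \<not> E j l" by blast
    then show ?thesis unfolding \<sigma>_def by (rule someI_ex)
  qed
  have s2: "l = \<sigma> j" if ji: "j \<noteq> i" and lj: "l \<noteq> j" and ne: "\<not> E j l" for j l
  proof -
    obtain l' where l': "{l. l \<noteq> j \<and> \<not> E j l} = {l'}" using single[OF ji] by blast
    have "l \<in> {l'}" using l' lj ne by blast
    moreover have "\<sigma> j \<in> {l'}" using l' s1[OF ji] by blast
    ultimately show ?thesis by simp
  qed
  have s3: "\<sigma> j \<noteq> i" if "j \<noteq> i" for j
    using s1[OF that] univ that E_sym by metis
  have s4: "\<sigma> (\<sigma> j) = j" if ji: "j \<noteq> i" for j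
  proof -
    have a: "\<sigma> j \<noteq> i" by (rule s3[OF ji])
    have "j \<noteq> \<sigma> j" using s1[OF ji] by auto
    moreover have "\<not> E (\<sigma> j) j" using s1[OF ji] E_sym by metis
    ultimately show ?thesis using s2[OF a] by metis
  qed
  have adjc: "E j l \<longleftrightarrow> l \<noteq> \<sigma> j" if "j \<noteq> i" "l \<noteq> j" for j l
    using s1[OF that(1)] s2[OF that(1) that(2)] by metis
  obtain h where hb: "bij_betw h (UNIV :: 'n set) {0..<CARD('n)}"
    using ex_bij_betw_finite_nat[of "UNIV :: 'n set"] by auto
  have hinj: "inj h" using hb by (simp add: bij_betw_def)
  define P where "P = {j. j \<noteq> i \<and> h j < h (\<sigma> j)}"
  have PorS: "j \<in> P \<longleftrightarrow> \<sigma> j \<notin> P" if ji: "j \<noteq> i" for j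
  proof -
    have "h j \<noteq> h (\<sigma> j)" using s1[OF ji] hinj by (metis injD)
    then show ?thesis using s3[OF ji] s4[OF ji] ji unfolding P_def by auto
  qed
  have Pi: "i \<notin> P" by (simp add: P_def)
  have sinj: "inj_on \<sigma> P"
  proof (rule inj_onI)
    fix a b assume "a \<in> P" "b \<in> P" "\<sigma> a = \<sigma> b"
    then show "a = b" using s4 Pi by metis
  qed
  have cover: "UNIV - {i} = P \<union> \<sigma> ` P"
  proof (intro set_eqI iffI)
    fix j assume "j \<in> UNIV - {i}"
    then have ji: "j \<noteq> i" by simp
    show "j \<in> P \<union> \<sigma> ` P"
    proof (cases "j \<in> P")
      case True then show ?thesis by simp
    next
      case False
      then have "\<sigma> j \<in> P" using PorS[OF ji] by simp
      moreover have "j = \<sigma> (\<sigma> j)" using s4[OF ji] by simp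
      ultimately show ?thesis by blast
    qed
  next
    fix j assume "j \<in> P \<union> \<sigma> ` P"
    then show "j \<in> UNIV - {i}" using Pi s3 by (auto simp: P_def)
  qed
  have disj: "P \<inter> \<sigma> ` P = {}"
  proof -
    have "\<sigma> a \<notin> P" if "a \<in> P" for a using that PorS Pi by metis
    then show ?thesis by auto
  qed
  have cardP: "CARD('n) - 1 = 2 * card P"
  proof -
    have "card (UNIV - {i}) = card P + card (\<sigma> ` P)" unfolding cover by (rule card_Un_disjoint) (use disj in auto)
    moreover have "card (\<sigma> ` P) = card P" using sinj by (rule card_image)
    ultimately show ?thesis by (simp add: card_Diff_singleton)
  qed
  obtain g' where g'b: "bij_betw g' {1..card P} P"
    using ex_bij_betw_nat_finite_1[of P] by auto
  define g where "g = inv_into {1..card P} g'"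
  have gb: "bij_betw g P {1..card P}" unfolding g_def by (rule bij_betw_inv_into[OF g'b])
  have ginj: "inj_on g P" using gb by (simp add: bij_betw_def)
  have grange: "g u \<in> {1..card P}" if "u \<in> P" for u using gb that by (auto simp: bij_betw_def)
  define rep where "rep u = (if u \<in> P then u else \<sigma> u)" for u
  have repP: "rep u \<in> P" if "u \<noteq> i" for u using PorS[OF that] by (auto simp: rep_def)
  define f where "f u = (if u = i then 0 else if u \<in> P then 2 * g u - 1 else 2 * g (\<sigma> u))" for u
  have fdiv: "(f u + 1) div 2 = (if u = i then 0 else g (rep u))" for u
  proof (cases "u = i")
    case True then show ?thesis by (simp add: f_def)
  next
    case False
    show ?thesis
    proof (cases "u \<in> P")
      case True
      have "g u \<ge> 1" using grange[OF True] by simp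
      then show ?thesis using False True by (simp add: f_def rep_def)
    next
      case nP: False
      then show ?thesis using False by (simp add: f_def rep_def)
    qed
  qed
  have grep1: "g (rep u) \<ge> 1" if "u \<noteq> i" for u using grange[OF repP[OF that]] by simp
  have flt: "f u < CARD('n)" for u
  proof (cases "u = i")
    case True then show ?thesis by (simp add: f_def)
  next
    case False
    have "g (rep u) \<le> card P" using grange[OF repP[OF False]] by simp
    moreover have "f u \<le> 2 * g (rep u)" using False by (auto simp: f_def rep_def)
    moreover have "0 < CARD('n)" by simp
    ultimately show ?thesis using cardP by arith
  qed
  have finj: "inj f"
  proof (rule injI)
    fix u v assume fe: "f u = f v"
    have par: "(u \<in> P) = (v \<in> P)" if "u \<noteq> i" "v \<noteq> i"
    proof -
      have gu: "g u \<ge> 1" if "u \<in> P" for u using grange[OF that] by simp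
      have "odd (f w) \<longleftrightarrow> w \<in> P" if "w \<noteq> i" for w
        using that gu[of w] by (auto simp: f_def)
      then show ?thesis using fe that by metis
    qed
    have f0: "f w \<noteq> 0" if "w \<noteq> i" for w
    proof -
      have "g (rep w) \<ge> 1" by (rule grep1[OF that])
      then have "(f w + 1) div 2 \<noteq> 0" using fdiv[of w] that by simp
      then show ?thesis by auto
    qed
    show "u = v"
    proof (cases "u = i \<or> v = i")
      case True
      then show ?thesis using fe f0 by (metis f_def)
    next
      case False
      then have ui: "u \<noteq> i" and vi: "v \<noteq> i" by auto
      have "g (rep u) = g (rep v)" using fdiv[of u] fdiv[of v] fe ui vi by simp
      then have rr: "rep u = rep v" using ginj repP[OF ui] repP[OF vi] by (metis inj_onD)
      show ?thesis
      proof (cases "u \<in> P")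
        case True
        then have "v \<in> P" using par[OF ui vi] by simp
        then show ?thesis using rr True by (simp add: rep_def)
      next
        case False
        then have "v \<notin> P" using par[OF ui vi] by simp
        then have "\<sigma> u = \<sigma> v" using rr False by (simp add: rep_def)
        then show ?thesis using s4[OF ui] s4[OF vi] by metis
      qed
    qed
  qed
  have fimg: "f ` UNIV = {0..<CARD('n)}"
  proof -
    have sub: "f ` UNIV \<subseteq> {0..<CARD('n)}" using flt by auto
    have "card (f ` UNIV) = CARD('n)" using finj by (simp add: card_image)
    then show ?thesis using sub by (intro card_subset_eq) auto
  qed
  have fbij: "bij_betw f (UNIV :: 'n set) {0..<CARD('n)}" using finj fimg by (simp add: bij_betw_def)
  have fadj: "E u v \<longleftrightarrow> K122_adj (f u) (f v)" for u v
  proof -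
    consider "u = v" | "u \<noteq> v" "u = i" | "u \<noteq> v" "v = i" | "u \<noteq> v" "u \<noteq> i" "v \<noteq> i" by blast
    then show ?thesis
    proof cases
      case 1 then show ?thesis using E_irr by (simp add: K122_adj_def)
    next
      case 2
      then have "E u v" using univ by simp
      moreover have "(f u + 1) div 2 \<noteq> (f v + 1) div 2" using fdiv[of u] fdiv[of v] grep1[of v] 2 by auto
      ultimately show ?thesis by (simp add: K122_adj_def)
    next
      case 3
      then have "E u v" using univ E_sym by metis
      moreover have "(f u + 1) div 2 \<noteq> (f v + 1) div 2" using fdiv[of u] fdiv[of v] grep1[of u] 3 by auto
      ultimately show ?thesis by (simp add: K122_adj_def)
    next
      case 4
      have "rep u = rep v \<longleftrightarrow> v = \<sigma> u"
      proof
        assume rr: "rep u = rep v"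
        show "v = \<sigma> u"
        proof (cases "u \<in> P")
          case True
          then have "v \<notin> P" using rr 4 by (auto simp: rep_def)
          then show ?thesis using rr True s4[OF 4(3)] by (simp add: rep_def)
        next
          case False
          then have "v \<in> P"
          proof -
            have "\<sigma> u = rep v" using rr False by (simp add: rep_def)
            show ?thesis
            proof (rule ccontr)
              assume "v \<notin> P"
              then have "\<sigma> u = \<sigma> v" using rr False by (simp add: rep_def)
              then show False using s4[OF 4(2)] s4[OF 4(3)] 4(1) by metis
            qed
          qed
          then show ?thesis using rr False by (simp add: rep_def)
        qed
      next
        assume vs: "v = \<sigma> u"
        show "rep u = rep v"
        proof (cases "u \<in> P")
          case True
          then have "v \<notin> P" using vs PorS[OF 4(2)] by simp
          then show ?thesis using True vs s4[OF 4(2)] by (simp add: rep_def)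
        next
          case False
          then have "v \<in> P" using vs PorS[OF 4(2)] by simp
          then show ?thesis using False vs by (simp add: rep_def)
        qed
      qed
      moreover have "g (rep u) = g (rep v) \<longleftrightarrow> rep u = rep v"
        using ginj repP[OF 4(2)] repP[OF 4(3)] by (metis inj_onD)
      moreover have "E u v \<longleftrightarrow> v \<noteq> \<sigma> u" using adjc 4 by metis
      ultimately show ?thesis using fdiv[of u] fdiv[of v] 4 by (simp add: K122_adj_def)
    qed
  qed
  show ?thesis unfolding iso_K122_def using fbij fadj by blast
qed

end

theorem theorem1:
  fixes E :: "'n::finite \<Rightarrow> 'n \<Rightarrow> bool"
  assumes "simple_graph E" and "connected_graph E" and "\<not> transmission_regular E"
  shows "(odd CARD('n) \<longrightarrow>
            tau E \<ge> (real CARD('n) + 2 - sqrt ((real CARD('n))\<^sup>2 + 4 * real CARD('n) - 4)) / 2 \<and>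
            (tau E = (real CARD('n) + 2 - sqrt ((real CARD('n))\<^sup>2 + 4 * real CARD('n) - 4)) / 2
               \<longleftrightarrow> iso_K122 E))
       \<and> (even CARD('n) \<longrightarrow>
            tau E \<ge> (real CARD('n) + 4 - sqrt ((real CARD('n))\<^sup>2 + 8 * real CARD('n))) / 2 \<and>
            (tau E = (real CARD('n) + 4 - sqrt ((real CARD('n))\<^sup>2 + 8 * real CARD('n))) / 2
               \<longleftrightarrow> DVDR (CARD('n) - 4) E))"
proof -
  interpret sgraph E using assms(1,2) by unfold_locales
  have n3: "CARD('n) \<ge> 3" by (rule card_ge3[OF assms(3)])
  then have n2: "CARD('n) \<ge> 2" by simp
  have K1: "(\<Sum>j\<in>UNIV. N - T j) \<ge> 1" by (rule K_ge1[OF assms(3)])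
  have e1: "(real CARD('n) + 2 * real (1::nat) - sqrt ((real CARD('n) + 2 * real (1::nat))^2 - 8 * real (1::nat))) / 2
      = (real CARD('n) + 2 - sqrt ((real CARD('n))\<^sup>2 + 4 * real CARD('n) - 4)) / 2"
  proof -
    have "(real CARD('n) + 2 * real (1::nat))^2 - 8 * real (1::nat) = (real CARD('n))\<^sup>2 + 4 * real CARD('n) - 4"
      by (simp add: power2_eq_square algebra_simps)
    then show ?thesis by simp
  qed
  have e2: "(real CARD('n) + 2 * real (2::nat) - sqrt ((real CARD('n) + 2 * real (2::nat))^2 - 8 * real (2::nat))) / 2
      = (real CARD('n) + 4 - sqrt ((real CARD('n))\<^sup>2 + 8 * real CARD('n))) / 2"
  proof -
    have "(real CARD('n) + 2 * real (2::nat))^2 - 8 * real (2::nat) = (real CARD('n))\<^sup>2 + 8 * real CARD('n)"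
      by (simp add: power2_eq_square algebra_simps)
    then show ?thesis by simp
  qed
  have odd_part: "odd CARD('n) \<longrightarrow>
            tau E \<ge> (real CARD('n) + 2 - sqrt ((real CARD('n))\<^sup>2 + 4 * real CARD('n) - 4)) / 2 \<and>
            (tau E = (real CARD('n) + 2 - sqrt ((real CARD('n))\<^sup>2 + 4 * real CARD('n) - 4)) / 2
               \<longleftrightarrow> iso_K122 E)"
  proof
    assume odd: "odd CARD('n)"
    have c1: "(1::nat) \<ge> 1" by simp
    note SI = structure_iff[OF c1 K1 n2, unfolded e1]
    have "(\<exists>i. (\<forall>j. j \<noteq> i \<longrightarrow> E i j) \<and> (\<forall>j. j \<noteq> i \<longrightarrow> card {l. l \<noteq> j \<and> \<not> E j l} = 1)) \<longleftrightarrow> iso_K122 E"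
      using iso_imp_struct[OF odd] struct_imp_iso by blast
    then show "tau E \<ge> (real CARD('n) + 2 - sqrt ((real CARD('n))\<^sup>2 + 4 * real CARD('n) - 4)) / 2 \<and>
            (tau E = (real CARD('n) + 2 - sqrt ((real CARD('n))\<^sup>2 + 4 * real CARD('n) - 4)) / 2
               \<longleftrightarrow> iso_K122 E)" using SI by simp
  qed
  have even_part: "even CARD('n) \<longrightarrow>
            tau E \<ge> (real CARD('n) + 4 - sqrt ((real CARD('n))\<^sup>2 + 8 * real CARD('n))) / 2 \<and>
            (tau E = (real CARD('n) + 4 - sqrt ((real CARD('n))\<^sup>2 + 8 * real CARD('n))) / 2
               \<longleftrightarrow> DVDR (CARD('n) - 4) E)"
  proof
    assume ev: "even CARD('n)"
    have n4: "CARD('n) \<ge> 4" using n3 ev by presburger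
    have aux: "\<And>m::nat. 1 \<le> m \<Longrightarrow> even m \<Longrightarrow> 2 \<le> m" by presburger
    have K2: "(\<Sum>j\<in>UNIV. N - T j) \<ge> 2" by (rule aux[OF K1 K_even[OF ev]])
    have c2: "(2::nat) \<ge> 1" by simp
    note SI = structure_iff[OF c2 K2 n2, unfolded e2]
    show "tau E \<ge> (real CARD('n) + 4 - sqrt ((real CARD('n))\<^sup>2 + 8 * real CARD('n))) / 2 \<and>
            (tau E = (real CARD('n) + 4 - sqrt ((real CARD('n))\<^sup>2 + 8 * real CARD('n))) / 2
               \<longleftrightarrow> DVDR (CARD('n) - 4) E)" using SI dvdr_iff[OF n4] by simp
  qed
  show ?thesis using odd_part even_part by blast
qed

end
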